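(* Consider one step of a delegated variational quantum algorithm (DVQA) in which a gradient approximation $g(\theta)=(g_1(\theta),\dots,g_{N_P}(\theta))$ of $\nabla f$ is computed via the Parameter Shift Rule, where $f(\theta)=\mathrm{Tr}[O\,U(\theta)\rho_{in}U^\dagger(\theta)]$ and $O=\sum_{i=1}^{N_o} c_iP_i$ is a global observable written as a real linear combination of local Pauli operators $P_i$. Each cost-function evaluation uses $N_s$ measurement shots (computation rounds). Let $\hat g(\theta)$ be the gradient obtained when $\delta$ of the computation rounds of the step are corrupted, let $e=\frac{\|g(\theta)-\hat g(\theta)\|}{\|g(\theta)\|}$ be the relative error of the gradient, and let $\epsilon_0>0$ be a lower bound on $\|g(\theta)\|$. Then $$e\le \frac{\sum_i |c_i|}{\epsilon_0 N_s}\,\delta .$$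
   Context: Parameter Shift Rule: for each parameter $\theta_j$ (with $N_P$ parameters in total), $g_j(\theta)=\frac12\big(f_{+}-f_{-}\big)$ where $f_{\pm}$ is $f$ evaluated with $\theta_j$ shifted by $\pm\pi/2$; hence one step requires $2N_P$ function evaluations and $2N_PN_s$ shots (computation rounds) in total. Each cost-function evaluation is estimated from the sample average of measured Pauli eigenvalues (each in $\{\pm1\}$) weighted by the coefficients $c_i$. A computation round is corrupted if the eigenvalue it returns is replaced by an arbitrary (adversarial) eigenvalue. The norm $\|\cdot\|$ denotes the $\ell_1$ norm $\|v\|=\sum_j |v_j|$. $\delta$ is the total number of corrupted computation rounds over all $2N_P$ function evaluations of the step. *)

theory Defs
  imports Complex_Main
begin

text \<open>Measurement record of one function evaluation: r s i is the eigenvalue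
(in {-1,1}) of Pauli term P_i returned by computation round s (s < Ns).\<close>
definition cost_est :: "nat \<Rightarrow> (nat \<Rightarrow> real) \<Rightarrow> nat \<Rightarrow> (nat \<Rightarrow> nat \<Rightarrow> real) \<Rightarrow> real" where
  "cost_est No c Ns r = (\<Sum>i<No. c i * ((\<Sum>s<Ns. r s i) / real Ns))"

text \<open>Parameter shift rule: m j True / m j False are the records of the
evaluations with theta_j shifted by +pi/2 / -pi/2.\<close>
definition psr_grad ::
  "nat \<Rightarrow> (nat \<Rightarrow> real) \<Rightarrow> nat \<Rightarrow> (nat \<Rightarrow> bool \<Rightarrow> nat \<Rightarrow> nat \<Rightarrow> real) \<Rightarrow> nat \<Rightarrow> real" where
  "psr_grad No c Ns m j = (cost_est No c Ns (m j True) - cost_est No c Ns (m j False)) / 2"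

definition l1norm :: "nat \<Rightarrow> (nat \<Rightarrow> real) \<Rightarrow> real" where
  "l1norm n v = (\<Sum>j<n. \<bar>v j\<bar>)"

end

theory Submission
  imports Defs
begin

lemma cost_diff:
  fixes r r' :: "nat \<Rightarrow> nat \<Rightarrow> real" and S :: "nat set"
  assumes Ns: "Ns > 0"
    and e1: "\<And>s i. s < Ns \<Longrightarrow> i < No \<Longrightarrow> r s i \<in> {-1, 1}"
    and e2: "\<And>s i. s < Ns \<Longrightarrow> i < No \<Longrightarrow> r' s i \<in> {-1, 1}"
    and un: "\<And>s i. s \<notin> S \<Longrightarrow> r' s i = r s i"
  shows "\<bar>cost_est No c Ns r - cost_est No c Ns r'\<bar>
     \<le> (\<Sum>i<No. \<bar>c i\<bar>) * (2 * real (card {s. s < Ns \<and> s \<in> S}) / real Ns)"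
proof -
  have inner: "\<bar>(\<Sum>s<Ns. r s i) - (\<Sum>s<Ns. r' s i)\<bar> \<le> 2 * real (card {s. s < Ns \<and> s \<in> S})"
    if i: "i < No" for i
  proof -
    have "\<bar>(\<Sum>s<Ns. r s i) - (\<Sum>s<Ns. r' s i)\<bar> = \<bar>\<Sum>s<Ns. r s i - r' s i\<bar>"
      by (simp add: sum_subtractf)
    also have "\<dots> \<le> (\<Sum>s<Ns. \<bar>r s i - r' s i\<bar>)" by (rule sum_abs)
    also have "\<dots> \<le> (\<Sum>s<Ns. if s \<in> S then 2 else 0)"
    proof (rule sum_mono)
      fix s assume "s \<in> {..<Ns}"
      then have "s < Ns" by simp
      then show "\<bar>r s i - r' s i\<bar> \<le> (if s \<in> S then 2 else 0)"
        using e1[of s i] e2[of s i] un[of s i] i by auto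
    qed
    also have "\<dots> = 2 * real (card {s. s < Ns \<and> s \<in> S})"
    proof -
      have "(\<Sum>s<Ns. if s \<in> S then (2::real) else 0) = (\<Sum>s\<in>{..<Ns} \<inter> S. 2)"
        by (simp add: sum.inter_restrict[symmetric] of_bool_def if_distrib cong: if_cong)
      also have "{..<Ns} \<inter> S = {s. s < Ns \<and> s \<in> S}" by auto
      finally show ?thesis by simp
    qed
    finally show ?thesis .
  qed
  have "cost_est No c Ns r - cost_est No c Ns r'
      = (\<Sum>i<No. c i * (((\<Sum>s<Ns. r s i) - (\<Sum>s<Ns. r' s i)) / real Ns))"
    unfolding cost_est_def sum_subtractf[symmetric]
    by (rule sum.cong) (simp_all add: sum_subtractf right_diff_distrib diff_divide_distrib)
  also have "\<bar>\<dots>\<bar> \<le> (\<Sum>i<No. \<bar>c i * (((\<Sum>s<Ns. r s i) - (\<Sum>s<Ns. r' s i)) / real Ns)\<bar>)"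
    by (rule sum_abs)
  also have "\<dots> \<le> (\<Sum>i<No. \<bar>c i\<bar> * (2 * real (card {s. s < Ns \<and> s \<in> S}) / real Ns))"
  proof (rule sum_mono)
    fix i assume "i \<in> {..<No}"
    then have "i < No" by simp
    then show "\<bar>c i * (((\<Sum>s<Ns. r s i) - (\<Sum>s<Ns. r' s i)) / real Ns)\<bar>
        \<le> \<bar>c i\<bar> * (2 * real (card {s. s < Ns \<and> s \<in> S}) / real Ns)"
      using inner[of i] Ns by (auto simp: abs_mult intro!: mult_left_mono divide_right_mono)
  qed
  also have "\<dots> = (\<Sum>i<No. \<bar>c i\<bar>) * (2 * real (card {s. s < Ns \<and> s \<in> S}) / real Ns)"
    by (rule sum_distrib_right[symmetric])
  finally show ?thesis .
qed

theorem lemma1: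
  fixes NP No Ns :: nat
    and c :: "nat \<Rightarrow> real"
    and m m' :: "nat \<Rightarrow> bool \<Rightarrow> nat \<Rightarrow> nat \<Rightarrow> real"
    and D :: "(nat \<times> bool \<times> nat) set"
    and \<epsilon>0 :: real
  assumes Ns_pos: "Ns > 0"
    and honest_eig: "\<And>j b s i. j < NP \<Longrightarrow> s < Ns \<Longrightarrow> i < No \<Longrightarrow> m j b s i \<in> {-1, 1}"
    and corr_eig: "\<And>j b s i. j < NP \<Longrightarrow> s < Ns \<Longrightarrow> i < No \<Longrightarrow> m' j b s i \<in> {-1, 1}"
    and D_rounds: "D \<subseteq> {..<NP} \<times> (UNIV :: bool set) \<times> {..<Ns}"
    and uncorrupted: "\<And>j b s i. (j, b, s) \<notin> D \<Longrightarrow> m' j b s i = m j b s i"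
    and eps_pos: "\<epsilon>0 > 0"
    and eps_lb: "l1norm NP (psr_grad No c Ns m) \<ge> \<epsilon>0"
  shows "l1norm NP (\<lambda>j. psr_grad No c Ns m j - psr_grad No c Ns m' j)
           / l1norm NP (psr_grad No c Ns m)
         \<le> (\<Sum>i<No. \<bar>c i\<bar>) / (\<epsilon>0 * real Ns) * real (card D)"
proof -
  define C where "C = (\<Sum>i<No. \<bar>c i\<bar>)"
  define K where "K j b = card {s. s < Ns \<and> s \<in> {s. (j, b, s) \<in> D}}" for j b
  have C0: "C \<ge> 0" unfolding C_def by (simp add: sum_nonneg)
  have cd: "\<bar>cost_est No c Ns (m j b) - cost_est No c Ns (m' j b)\<bar> \<le> C * (2 * real (K j b) / real Ns)"
    if "j < NP" for j b
    unfolding C_def K_def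
    by (rule cost_diff[OF Ns_pos]) (use that honest_eig corr_eig uncorrupted in auto)
  have pd: "\<bar>psr_grad No c Ns m j - psr_grad No c Ns m' j\<bar> \<le> C / real Ns * (real (K j True) + real (K j False))"
    if "j < NP" for j
  proof -
    have "psr_grad No c Ns m j - psr_grad No c Ns m' j =
      ((cost_est No c Ns (m j True) - cost_est No c Ns (m' j True))
       - (cost_est No c Ns (m j False) - cost_est No c Ns (m' j False))) / 2"
      unfolding psr_grad_def by (simp add: field_simps)
    then have "\<bar>psr_grad No c Ns m j - psr_grad No c Ns m' j\<bar> \<le>
      (\<bar>cost_est No c Ns (m j True) - cost_est No c Ns (m' j True)\<bar>
       + \<bar>cost_est No c Ns (m j False) - cost_est No c Ns (m' j False)\<bar>) / 2"
      using abs_triangle_ineq4[of "cost_est No c Ns (m j True) - cost_est No c Ns (m' j True)"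
         "cost_est No c Ns (m j False) - cost_est No c Ns (m' j False)"] by (simp add: abs_if split: if_splits)
    also have "\<dots> \<le> (C * (2 * real (K j True) / real Ns) + C * (2 * real (K j False) / real Ns)) / 2"
      using cd[OF that, of True] cd[OF that, of False] by simp
    also have "\<dots> = C / real Ns * (real (K j True) + real (K j False))"
      using Ns_pos by (simp add: field_simps)
    finally show ?thesis .
  qed
  have cardD: "card D = (\<Sum>j<NP. K j True + K j False)"
  proof -
    have Deq: "D = Sigma {..<NP} (\<lambda>j. Sigma UNIV (\<lambda>b. {s. s < Ns \<and> s \<in> {s. (j, b, s) \<in> D}}))"
      using D_rounds by auto
    have "card D = card (Sigma {..<NP} (\<lambda>j. Sigma UNIV (\<lambda>b. {s. s < Ns \<and> s \<in> {s. (j, b, s) \<in> D}})))"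
      using arg_cong[OF Deq, of card] .
    also have "\<dots> = (\<Sum>j<NP. card (Sigma UNIV (\<lambda>b. {s. s < Ns \<and> s \<in> {s. (j, b, s) \<in> D}})))"
      by (rule card_SigmaI) auto
    also have "\<dots> = (\<Sum>j<NP. K j True + K j False)"
      by (rule sum.cong) (auto simp: card_SigmaI UNIV_bool K_def)
    finally show ?thesis .
  qed
  have num: "l1norm NP (\<lambda>j. psr_grad No c Ns m j - psr_grad No c Ns m' j) \<le> C / real Ns * real (card D)"
  proof -
    have "l1norm NP (\<lambda>j. psr_grad No c Ns m j - psr_grad No c Ns m' j)
        \<le> (\<Sum>j<NP. C / real Ns * (real (K j True) + real (K j False)))"
      unfolding l1norm_def by (rule sum_mono) (use pd in auto)
    also have "\<dots> = C / real Ns * real (card D)"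
      by (simp add: cardD sum_distrib_left)
    finally show ?thesis .
  qed
  have nn: "l1norm NP (\<lambda>j. psr_grad No c Ns m j - psr_grad No c Ns m' j) \<ge> 0"
    unfolding l1norm_def by (simp add: sum_nonneg)
  have "l1norm NP (\<lambda>j. psr_grad No c Ns m j - psr_grad No c Ns m' j) / l1norm NP (psr_grad No c Ns m)
      \<le> l1norm NP (\<lambda>j. psr_grad No c Ns m j - psr_grad No c Ns m' j) / \<epsilon>0"
    using eps_pos eps_lb nn by (intro divide_left_mono) auto
  also have "\<dots> \<le> C / real Ns * real (card D) / \<epsilon>0"
    using num eps_pos by (intro divide_right_mono) auto
  also have "\<dots> = C / (\<epsilon>0 * real Ns) * real (card D)" by simp
  finally show ?thesis unfolding C_def .
qed

end
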